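(* Let $\eta>0$, $\beta\in\mathbb{R}$, and let $\widehat{\mathcal{L}}\in\mathbb{R}^{N\times N}$ satisfy $\langle\widehat{\mathcal{L}}\mathbf{x},\mathbf{x}\rangle\le0$ for all $\mathbf{x}\in\mathbb{R}^N$. For $\gamma>0$ define $$\mathcal{P}_\gamma:=\left[(\eta^2+\beta^2)I-2\eta\widehat{\mathcal{L}}+\widehat{\mathcal{L}}^2\right](\eta I-\widehat{\mathcal{L}})^{-1}(\gamma I-\widehat{\mathcal{L}})^{-1}.$$ With $\gamma_*:=\eta+\frac{\beta^2}{\eta}$, the two-norm condition number satisfies $$\kappa(\mathcal{P}_{\gamma_*})\le 1+\frac{\beta^2}{2\eta^2}.$$
   Context: $\langle\cdot,\cdot\rangle$ is the Euclidean inner product on $\mathbb{R}^N$; $\kappa(A)=\|A\|\,\|A^{-1}\|$ with the operator two-norm. $\mathcal{P}_\gamma$ is the Schur complement $\eta I-\widehat{\mathcal{L}}+\beta^2(\eta I-\widehat{\mathcal{L}})^{-1}$ right-preconditioned by $(\gamma I-\widehat{\mathcal{L}})^{-1}$. *)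

theory Defs
  imports "HOL-Analysis.Analysis"
begin

definition cond2 :: "real^'n^'n \<Rightarrow> real" where
  "cond2 A = onorm (\<lambda>x. A *v x) * onorm (\<lambda>x. matrix_inv A *v x)"

definition Pgamma :: "real \<Rightarrow> real \<Rightarrow> real \<Rightarrow> real^'n^'n \<Rightarrow> real^'n^'n" where
  "Pgamma \<eta> \<beta> \<gamma> L =
     (mat (\<eta>^2 + \<beta>^2) - (2 * \<eta>) *\<^sub>R L + L ** L)
       ** matrix_inv (mat \<eta> - L) ** matrix_inv (mat \<gamma> - L)"

end

theory Submission
  imports Defs
begin

lemma mat_mult_vec: "(mat k :: real^'n^'n) *v x = k *\<^sub>R x"
proof -
  have "mat k = k *\<^sub>R (mat 1 :: real^'n^'n)" by (simp add: mat_def vec_eq_iff)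
  then show ?thesis by (metis matrix_vector_mul_lid scaleR_matrix_vector_assoc)
qed

lemma inv_from_right:
  fixes X Y :: "real^'n^'n"
  assumes "X ** Y = mat 1"
  shows "matrix_inv X = Y"
proof -
  have "invertible X" using assms invertible_right_inverse by blast
  then obtain X' where X': "X ** X' = mat 1" "X' ** X = mat 1" by (auto simp: invertible_def)
  have "X' = X' ** (X ** Y)" using assms by simp
  also have "\<dots> = Y" by (simp add: matrix_mul_assoc X')
  finally have YX: "Y ** X = mat 1" using X' by simp
  have ex: "\<exists>A'. X ** A' = mat 1 \<and> A' ** X = mat 1" using assms YX by blast
  define Z where "Z = matrix_inv X"
  have Z: "X ** Z = mat 1 \<and> Z ** X = mat 1"
    unfolding Z_def matrix_inv_def by (rule someI_ex[OF ex])
  have "Z = Z ** (X ** Y)" using assms by simp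
  also have "\<dots> = Y" using Z by (simp add: matrix_mul_assoc)
  finally show ?thesis using Z_def by simp
qed

lemma inj_inv:
  fixes X :: "real^'n^'n"
  assumes "\<forall>x. X *v x = 0 \<longrightarrow> x = 0"
  shows "\<And>y. X *v (matrix_inv X *v y) = y" "\<And>y. matrix_inv X *v (X *v y) = y"
proof -
  have "inj ((*v) X)" using assms vec.inj_iff_eq_0 by blast
  then have "invertible X" using matrix_left_invertible_injective invertible_left_inverse by blast
  then have ex: "\<exists>A'. X ** A' = mat 1 \<and> A' ** X = mat 1" by (simp add: invertible_def)
  have Z: "X ** matrix_inv X = mat 1 \<and> matrix_inv X ** X = mat 1"
    unfolding matrix_inv_def by (rule someI_ex[OF ex])
  show "\<And>y. X *v (matrix_inv X *v y) = y" "\<And>y. matrix_inv X *v (X *v y) = y"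
    using Z by (metis matrix_vector_mul_assoc matrix_vector_mul_lid)+
qed

theorem corollary2:
  fixes L :: "real^'n^'n" and \<eta> \<beta> :: real
  assumes "\<eta> > 0"
    and "\<forall>x. (L *v x) \<bullet> x \<le> 0"
  shows "cond2 (Pgamma \<eta> \<beta> (\<eta> + \<beta>^2 / \<eta>) L) \<le> 1 + \<beta>^2 / (2 * \<eta>^2)"
proof -
  note hyp = assms(2)[rule_format]
  define \<delta> where "\<delta> = \<beta>^2 / \<eta>"
  define \<gamma> where "\<gamma> = \<eta> + \<delta>"
  define c where "c = \<eta>^2 + \<beta>^2"
  have d0: "\<delta> \<ge> 0" unfolding \<delta>_def using assms(1) by simp
  have etad: "\<eta> * \<delta> = \<beta>^2" unfolding \<delta>_def using assms(1) by simp
  have g0: "\<gamma> > 0" unfolding \<gamma>_def using d0 assms(1) by simp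
  have c0: "c > 0" unfolding c_def using assms(1) by (simp add: add_pos_nonneg)
  define A where "A = mat \<eta> - L"
  define G where "G = mat \<gamma> - L"
  define B where "B = mat c - (2 * \<eta>) *\<^sub>R L + L ** L"
  define Ai where "Ai = matrix_inv A"
  define Gi where "Gi = matrix_inv G"
  define Bi where "Bi = matrix_inv B"
  have Pdef: "Pgamma \<eta> \<beta> (\<eta> + \<beta>^2 / \<eta>) L = B ** Ai ** Gi"
    unfolding Pgamma_def B_def Ai_def Gi_def A_def G_def \<gamma>_def \<delta>_def c_def by simp
  have Av: "A *v x = \<eta> *\<^sub>R x - L *v x" for x
    unfolding A_def by (simp add: matrix_vector_mult_diff_rdistrib mat_mult_vec)
  have Gv: "G *v x = \<gamma> *\<^sub>R x - L *v x" for x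
    unfolding G_def by (simp add: matrix_vector_mult_diff_rdistrib mat_mult_vec)
  have Bv: "B *v x = c *\<^sub>R x - (2 * \<eta>) *\<^sub>R (L *v x) + L *v (L *v x)" for x
    unfolding B_def
    by (simp add: matrix_vector_mult_diff_rdistrib matrix_vector_mult_add_rdistrib mat_mult_vec
        matrix_vector_mul_assoc scaleR_matrix_vector_assoc)
  have Ainj: "\<forall>x. A *v x = 0 \<longrightarrow> x = 0"
  proof (intro allI impI)
    fix x assume "A *v x = 0"
    then have "(A *v x) \<bullet> x = 0" by simp
    then have "\<eta> * (x \<bullet> x) - (L *v x) \<bullet> x = 0" by (simp add: Av inner_diff_left)
    then have "\<eta> * (x \<bullet> x) \<le> 0" using hyp[of x] by linarith
    then have "x \<bullet> x \<le> 0" using assms(1) by (simp add: mult_le_0_iff)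
    then show "x = 0" by (metis inner_ge_zero inner_eq_zero_iff order_antisym)
  qed
  have Ginj: "\<forall>x. G *v x = 0 \<longrightarrow> x = 0"
  proof (intro allI impI)
    fix x assume "G *v x = 0"
    then have "(G *v x) \<bullet> x = 0" by simp
    then have "\<gamma> * (x \<bullet> x) - (L *v x) \<bullet> x = 0" by (simp add: Gv inner_diff_left)
    then have "\<gamma> * (x \<bullet> x) \<le> 0" using hyp[of x] by linarith
    then have "x \<bullet> x \<le> 0" using g0 by (simp add: mult_le_0_iff)
    then show "x = 0" by (metis inner_ge_zero inner_eq_zero_iff order_antisym)
  qed
  have K: "(B *v z) \<bullet> (L *v z) \<le> - (2 * \<eta>) * ((L *v z) \<bullet> (L *v z))" for z
  proof -
    have "(B *v z) \<bullet> (L *v z) = c * (z \<bullet> (L *v z)) - (2 * \<eta>) * ((L *v z) \<bullet> (L *v z))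
           + (L *v (L *v z)) \<bullet> (L *v z)"
      by (simp add: Bv inner_diff_left inner_add_left)
    moreover have "z \<bullet> (L *v z) \<le> 0" using hyp[of z] by (simp add: inner_commute)
    moreover have "(L *v (L *v z)) \<bullet> (L *v z) \<le> 0" using hyp[of "L *v z"] .
    moreover have "c * (z \<bullet> (L *v z)) \<le> 0"
      using c0 \<open>z \<bullet> (L *v z) \<le> 0\<close> by (simp add: mult_nonneg_nonpos)
    ultimately show ?thesis by linarith
  qed
  have N2: "2 * \<eta> * norm (L *v z) \<le> norm (B *v z)" for z
  proof (cases "L *v z = 0")
    case True then show ?thesis by simp
  next
    case False
    have "2 * \<eta> * (norm (L *v z) * norm (L *v z)) \<le> - ((B *v z) \<bullet> (L *v z))"
      using K[of z] by (simp add: inner_commute dot_square_norm power2_eq_square)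
    also have "\<dots> = (- (B *v z)) \<bullet> (L *v z)" by simp
    also have "\<dots> \<le> norm (B *v z) * norm (L *v z)"
      using norm_cauchy_schwarz[of "- (B *v z)" "L *v z"] by simp
    finally have "(2 * \<eta> * norm (L *v z)) * norm (L *v z) \<le> norm (B *v z) * norm (L *v z)"
      by (simp add: mult_ac)
    then show ?thesis using False by simp
  qed
  have N1: "norm (B *v z) \<le> norm (B *v z - \<delta> *\<^sub>R (L *v z))" for z
  proof -
    have e1: "(B *v z - \<delta> *\<^sub>R (L *v z)) \<bullet> (B *v z - \<delta> *\<^sub>R (L *v z))
        = (B *v z) \<bullet> (B *v z) - 2 * \<delta> * ((B *v z) \<bullet> (L *v z)) + \<delta> * \<delta> * ((L *v z) \<bullet> (L *v z))"
      by (simp add: inner_diff_left inner_diff_right inner_commute algebra_simps)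
    have "0 \<le> (2 * \<eta>) * ((L *v z) \<bullet> (L *v z))" using assms(1) by simp
    then have e2: "(B *v z) \<bullet> (L *v z) \<le> 0" using K[of z] by linarith
    have e3: "0 \<le> \<delta> * \<delta> * ((L *v z) \<bullet> (L *v z))" by simp
    have e4: "\<delta> * ((B *v z) \<bullet> (L *v z)) \<le> 0"
      using d0 e2 by (simp add: mult_nonneg_nonpos)
    have "(B *v z) \<bullet> (B *v z) \<le> (B *v z - \<delta> *\<^sub>R (L *v z)) \<bullet> (B *v z - \<delta> *\<^sub>R (L *v z))"
      using e1 e3 e4 by linarith
    then show ?thesis by (simp add: norm_le)
  qed
  have Binj: "\<forall>x. B *v x = 0 \<longrightarrow> x = 0"
  proof (intro allI impI)
    fix x assume B0: "B *v x = 0"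
    then have "2 * \<eta> * norm (L *v x) \<le> 0" using N2[of x] by simp
    then have L0: "L *v x = 0" using assms(1) by (simp add: mult_le_0_iff)
    have "L *v (L *v x) = 0" using L0 by simp
    then have "c *\<^sub>R x = 0" using B0 L0 by (simp add: Bv)
    then show "x = 0" using c0 by simp
  qed
  have GA: "G *v (A *v z) = B *v z - \<delta> *\<^sub>R (L *v z)" for z
  proof -
    have lin: "linear ((*v) L)" by (rule matrix_vector_mul_linear)
    have L1: "L *v (A *v z) = \<eta> *\<^sub>R (L *v z) - L *v (L *v z)"
      unfolding Av by (simp only: linear_diff[OF lin] linear_cmul[OF lin])
    have "G *v (A *v z) = \<gamma> *\<^sub>R (\<eta> *\<^sub>R z - L *v z) - (\<eta> *\<^sub>R (L *v z) - L *v (L *v z))"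
      by (simp only: Gv L1) (simp add: Av)
    also have "\<dots> = (\<gamma> * \<eta>) *\<^sub>R z - (\<gamma> + \<eta>) *\<^sub>R (L *v z) + L *v (L *v z)"
      by (simp add: algebra_simps scaleR_left_distrib)
    finally have "G *v (A *v z) = (\<gamma> * \<eta>) *\<^sub>R z - (\<gamma> + \<eta>) *\<^sub>R (L *v z) + L *v (L *v z)" .
    moreover have "\<gamma> * \<eta> = c" unfolding \<gamma>_def c_def using etad by (simp add: algebra_simps power2_eq_square)
    moreover have "\<gamma> + \<eta> = 2 * \<eta> + \<delta>" unfolding \<gamma>_def by simp
    ultimately have "G *v (A *v z) = c *\<^sub>R z - (2 * \<eta> + \<delta>) *\<^sub>R (L *v z) + L *v (L *v z)"
      by simp
    moreover have "c *\<^sub>R z - (2 * \<eta> + \<delta>) *\<^sub>R (L *v z) + L *v (L *v z) = B *v z - \<delta> *\<^sub>R (L *v z)"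
      unfolding Bv by (simp add: scaleR_left_distrib algebra_simps)
    ultimately show ?thesis by simp
  qed
  note Ainv = inj_inv[OF Ainj, folded Ai_def]
  note Ginv = inj_inv[OF Ginj, folded Gi_def]
  note Binv = inj_inv[OF Binj, folded Bi_def]
  define P where "P = B ** Ai ** Gi"
  define Q where "Q = G ** A ** Bi"
  have PQ: "P ** Q = mat 1"
    unfolding matrix_eq
    by (simp add: P_def Q_def matrix_vector_mul_assoc[symmetric] Ainv Ginv Binv)
  have Qinv: "matrix_inv P = Q" using inv_from_right[OF PQ] .
  have onP: "onorm (\<lambda>x. P *v x) \<le> 1"
  proof (rule onorm_le)
    fix x
    define z where "z = Ai *v (Gi *v x)"
    have Px: "P *v x = B *v z" by (simp add: P_def z_def matrix_vector_mul_assoc[symmetric])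
    have "x = G *v (A *v z)" by (simp add: z_def Ainv Ginv)
    then have "x = B *v z - \<delta> *\<^sub>R (L *v z)" by (simp add: GA)
    then show "norm (P *v x) \<le> 1 * norm x" using N1[of z] Px by simp
  qed
  have onQ: "onorm (\<lambda>x. Q *v x) \<le> 1 + \<beta>^2 / (2 * \<eta>^2)"
  proof (rule onorm_le)
    fix x
    define z where "z = Bi *v x"
    have xz: "B *v z = x" by (simp add: z_def Binv)
    have "Q *v x = G *v (A *v z)" by (simp add: Q_def z_def matrix_vector_mul_assoc[symmetric])
    also have "\<dots> = x - \<delta> *\<^sub>R (L *v z)" by (simp add: GA xz)
    finally have "norm (Q *v x) \<le> norm x + \<delta> * norm (L *v z)"
      using norm_triangle_ineq4[of x "\<delta> *\<^sub>R (L *v z)"] d0 by simp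
    also have "\<delta> * norm (L *v z) \<le> \<delta> * (norm x / (2 * \<eta>))"
      using N2[of z] xz assms(1) d0 by (intro mult_left_mono) (simp_all add: field_simps)
    finally have "norm (Q *v x) \<le> norm x + \<delta> * (norm x / (2 * \<eta>))" by simp
    also have "\<dots> = (1 + \<beta>^2 / (2 * \<eta>^2)) * norm x"
      unfolding \<delta>_def using assms(1) by (simp add: field_simps power2_eq_square)
    finally show "norm (Q *v x) \<le> (1 + \<beta>^2 / (2 * \<eta>^2)) * norm x" .
  qed
  have Qpos: "0 \<le> onorm (\<lambda>x. Q *v x)"
    using onorm_pos_le[OF matrix_vector_mul_bounded_linear[of Q]] by simp
  have "cond2 P = onorm (\<lambda>x. P *v x) * onorm (\<lambda>x. Q *v x)"
    unfolding cond2_def Qinv ..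
  also have "\<dots> \<le> 1 * (1 + \<beta>^2 / (2 * \<eta>^2))"
    using onP onQ Qpos by (intro mult_mono) auto
  finally show ?thesis using Pdef P_def by simp
qed

end
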